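(* Let $G$ be a group. (i) If $H \leqslant M \leqslant G$, $M$ is exponential in $G$ and $H$ is exponential in $M$, then $H$ is exponential in $G$. (ii) If $H$ and $K$ are exponential subgroups of $G$, then $H \cap K$ is exponential in $G$.
   Context: A subgroup $H$ of finite index in a group $G$ is called exponential in $G$ if $x^{|G:H|} \in H$ for every $x \in G$. *)

theory Defs
  imports "HOL-Algebra.Algebra"
begin

definition exponential :: "('a, 'b) monoid_scheme \<Rightarrow> 'a set \<Rightarrow> bool" where
  "exponential G H \<longleftrightarrow>
     subgroup H G \<and> finite (rcosets\<^bsub>G\<^esub> H) \<and>
     (\<forall>x \<in> carrier G. x [^]\<^bsub>G\<^esub> card (rcosets\<^bsub>G\<^esub> H) \<in> H)"

end

theory Submission
  imports Defs
begin

context group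
begin

lemma sub_rcoset_eq: "H #>\<^bsub>G\<lparr>carrier := M\<rparr>\<^esub> a = H #> a"
  by (simp add: r_coset_def)

lemma sub_rcosets_eq: "rcosets\<^bsub>G\<lparr>carrier := M\<rparr>\<^esub> H = (\<lambda>m. H #> m) ` M"
  by (auto simp add: RCOSETS_def r_coset_def)

lemma sub_pow_closed:
  assumes "subgroup H G" "x \<in> H"
  shows "x [^] (n::nat) \<in> H"
proof -
  have "group (G\<lparr>carrier := H\<rparr>)" using assms(1) subgroup.subgroup_is_group is_group by blast
  then have "x [^]\<^bsub>G\<lparr>carrier := H\<rparr>\<^esub> n \<in> H"
    using monoid.nat_pow_closed[of "G\<lparr>carrier := H\<rparr>"] assms(2) group.is_monoid by fastforce
  then show ?thesis using nat_pow_consistent by metis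
qed

lemma rep_in:
  assumes "subgroup M G" "C \<in> rcosets M"
  shows "(SOME a. a \<in> C) \<in> C" "(SOME a. a \<in> C) \<in> carrier G" "C = M #> (SOME a. a \<in> C)"
proof -
  obtain x where x: "x \<in> carrier G" "C = M #> x" using assms(2) by (auto simp: RCOSETS_def)
  have "x \<in> C" using x rcos_self assms(1) by blast
  then show 1: "(SOME a. a \<in> C) \<in> C" by (rule someI)
  show "(SOME a. a \<in> C) \<in> carrier G" using 1 x assms(1)
    by (meson r_coset_subset_G subgroup.subset subsetD)
  show "C = M #> (SOME a. a \<in> C)" using 1 x repr_independence assms(1) by blast
qed

lemma index_mult:
  assumes H: "subgroup H G" and M: "subgroup M G" and HM: "H \<subseteq> M"
    and f1: "finite (rcosets M)" and f2: "finite (rcosets\<^bsub>G\<lparr>carrier := M\<rparr>\<^esub> H)"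
  shows "finite (rcosets H) \<and> card (rcosets H) = card (rcosets M) * card (rcosets\<^bsub>G\<lparr>carrier := M\<rparr>\<^esub> H)"
proof -
  define R where "R = rcosets\<^bsub>G\<lparr>carrier := M\<rparr>\<^esub> H"
  define r where "r = (\<lambda>C::'a set. SOME a. a \<in> C)"
  define f where "f = (\<lambda>(C, D). D #> r C)"
  have R: "R = (\<lambda>m. H #> m) ` M" unfolding R_def by (rule sub_rcosets_eq)
  have Hc: "H \<subseteq> carrier G" using H subgroup.subset by blast
  have Mc: "M \<subseteq> carrier G" using M subgroup.subset by blast
  have rC: "r C \<in> C" "r C \<in> carrier G" "C = M #> r C" if "C \<in> rcosets M" for C
    using rep_in[OF M that] unfolding r_def by auto
  have inj: "inj_on f ((rcosets M) \<times> R)"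
  proof (rule inj_onI)
    fix p q assume p: "p \<in> (rcosets M) \<times> R" and q: "q \<in> (rcosets M) \<times> R" and e: "f p = f q"
    obtain C m where pC: "p = (C, H #> m)" "C \<in> rcosets M" "m \<in> M" using p R by auto
    obtain C' m' where qC: "q = (C', H #> m')" "C' \<in> rcosets M" "m' \<in> M" using q R by auto
    let ?a = "r C" let ?a' = "r C'"
    have a: "?a \<in> carrier G" "?a' \<in> carrier G" using rC pC qC by auto
    have mc: "m \<in> carrier G" "m' \<in> carrier G" using pC qC Mc by auto
    have "H #> (m \<otimes> ?a) = H #> m #> ?a" by (rule coset_mult_assoc[OF Hc mc(1) a(1), symmetric])
    also have "\<dots> = f p" using pC by (simp add: f_def)
    also have "\<dots> = f q" by (rule e)
    also have "\<dots> = H #> m' #> ?a'" using qC by (simp add: f_def)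
    also have "\<dots> = H #> (m' \<otimes> ?a')" by (rule coset_mult_assoc[OF Hc mc(2) a(2)])
    finally have e2: "H #> (m \<otimes> ?a) = H #> (m' \<otimes> ?a')" .
    have "m \<otimes> ?a \<in> H #> (m \<otimes> ?a)" using rcos_self H a mc by simp
    then have "m \<otimes> ?a \<in> M #> (m' \<otimes> ?a')" using e2 HM by (auto simp: r_coset_def)
    also have "\<dots> = M #> ?a'"
      using coset_mult_assoc[OF Mc mc(2) a(2), symmetric] coset_join2[OF mc(2) M qC(3)] by simp
    also have "\<dots> = C'" using rC qC by auto
    finally have in1: "m \<otimes> ?a \<in> C'" .
    have "m \<otimes> ?a \<in> M #> ?a" using rcosI pC Mc a by blast
    then have in2: "m \<otimes> ?a \<in> C" using rC pC by auto
    have CC: "C = C'"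
    proof (rule ccontr)
      assume "C \<noteq> C'"
      then have "disjnt C C'" using pairwiseD[OF rcos_disjoint[OF M] pC(2) qC(2)] by blast
      then show False using in1 in2 by (simp add: disjnt_iff)
    qed
    have ia: "inv ?a \<in> carrier G" using a by simp
    have "H #> m = H #> (m \<otimes> ?a \<otimes> inv ?a)" using a mc by (simp add: m_assoc)
    also have "\<dots> = H #> (m \<otimes> ?a) #> inv ?a" using coset_mult_assoc[OF Hc _ ia] a mc by simp
    also have "\<dots> = H #> (m' \<otimes> ?a) #> inv ?a" using e2 CC by simp
    also have "\<dots> = H #> (m' \<otimes> ?a \<otimes> inv ?a)" using coset_mult_assoc[OF Hc _ ia] a mc by simp
    also have "\<dots> = H #> m'" using a mc by (simp add: m_assoc)
    finally have "H #> m = H #> m'" .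
    then show "p = q" using pC qC CC by simp
  qed
  have img: "f ` ((rcosets M) \<times> R) = rcosets H"
  proof
    show "f ` ((rcosets M) \<times> R) \<subseteq> rcosets H"
    proof
      fix Y assume "Y \<in> f ` ((rcosets M) \<times> R)"
      then obtain C m where Y: "Y = f (C, H #> m)" "C \<in> rcosets M" "m \<in> M" using R by auto
      have mc: "m \<in> carrier G" using Y Mc by auto
      have rc: "r C \<in> carrier G" using rC Y by blast
      have "Y = H #> m #> r C" using Y by (simp add: f_def)
      also have "\<dots> = H #> (m \<otimes> r C)" by (rule coset_mult_assoc[OF Hc mc rc])
      finally show "Y \<in> rcosets H" using rcosetsI[OF Hc m_closed[OF mc rc]] by simp
    qed
  next
    show "rcosets H \<subseteq> f ` ((rcosets M) \<times> R)"
    proof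
      fix Y assume "Y \<in> rcosets H"
      then obtain x where x: "x \<in> carrier G" "Y = H #> x" by (auto simp: RCOSETS_def)
      define C where "C = M #> x"
      have C: "C \<in> rcosets M" using rcosetsI Mc x C_def by blast
      then have "r C \<in> M #> x" using rC C_def by blast
      then obtain m0 where m0: "m0 \<in> M" "r C = m0 \<otimes> x" by (auto simp: r_coset_def)
      have m0c: "m0 \<in> carrier G" using m0 Mc by auto
      have im: "inv m0 \<in> M" by (rule subgroup.m_inv_closed[OF M m0(1)])
      have "f (C, H #> inv m0) = H #> inv m0 #> (m0 \<otimes> x)" using m0 by (simp add: f_def)
      also have "\<dots> = H #> (inv m0 \<otimes> (m0 \<otimes> x))" using coset_mult_assoc[OF Hc _ m_closed[OF m0c x(1)]] m0c by simp
      also have "\<dots> = H #> x" using m0c x by (simp add: m_assoc[symmetric])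
      finally have "f (C, H #> inv m0) = Y" using x by simp
      moreover have "(C, H #> inv m0) \<in> (rcosets M) \<times> R" using C im R by auto
      ultimately show "Y \<in> f ` ((rcosets M) \<times> R)" by force
    qed
  qed
  have fin: "finite ((rcosets M) \<times> R)" using f1 f2 R_def by simp
  have "finite (rcosets H)" using img fin finite_imageI by metis
  moreover have "card (rcosets H) = card ((rcosets M) \<times> R)" using card_image[OF inj] img by simp
  ultimately show ?thesis by (simp add: card_cartesian_product R_def)
qed


lemma pow_mult_in:
  assumes "subgroup S G" "x \<in> carrier G" "x [^] n \<in> S"
  shows "x [^] (n * k :: nat) \<in> S"
proof -
  have "x [^] (n * k) = (x [^] n) [^] k" using nat_pow_pow[OF assms(2)] by simp
  then show ?thesis using sub_pow_closed[OF assms(1) assms(3)] by simp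
qed

lemma sub_rcosets_subset:
  assumes "subgroup S G" "S \<subseteq> M" "M \<subseteq> carrier G"
  shows "rcosets\<^bsub>G\<lparr>carrier := M\<rparr>\<^esub> S \<subseteq> rcosets S"
proof -
  have Sc: "S \<subseteq> carrier G" using assms(1) subgroup.subset by blast
  show ?thesis unfolding sub_rcosets_eq using rcosetsI[OF Sc] assms(3) by blast
qed

lemma inter_index_finite:
  assumes H: "subgroup H G" and K: "subgroup K G"
    and fH: "finite (rcosets H)" and fK: "finite (rcosets K)"
  shows "finite (rcosets (H \<inter> K))"
proof -
  define r where "r = (\<lambda>C::'a set. SOME a. a \<in> C)"
  define g where "g = (\<lambda>Y. (H #> r Y, K #> r Y))"
  have HK: "subgroup (H \<inter> K) G" using subgroups_Inter_pair[OF H K] .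
  have HKc: "H \<inter> K \<subseteq> carrier G" using HK subgroup.subset by blast
  have Hc: "H \<subseteq> carrier G" using H subgroup.subset by blast
  have Kc: "K \<subseteq> carrier G" using K subgroup.subset by blast
  have rC: "r C \<in> C" "r C \<in> carrier G" "C = (H \<inter> K) #> r C" if "C \<in> rcosets (H \<inter> K)" for C
    using rep_in[OF HK that] unfolding r_def by auto
  have inj: "inj_on g (rcosets (H \<inter> K))"
  proof (rule inj_onI)
    fix Y Z assume Y: "Y \<in> rcosets (H \<inter> K)" and Z: "Z \<in> rcosets (H \<inter> K)" and e: "g Y = g Z"
    let ?a = "r Y" let ?b = "r Z"
    have a: "?a \<in> carrier G" "?b \<in> carrier G" using rC Y Z by auto
    have eH: "H #> ?a = H #> ?b" and eK: "K #> ?a = K #> ?b" using e by (auto simp: g_def)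
    have "?a \<in> H #> ?b" using rcos_self[OF a(1) H] eH by simp
    then have h: "?a \<otimes> inv ?b \<in> H" using subgroup.rcos_module_imp[OF H is_group a(2)] by blast
    have "?a \<in> K #> ?b" using rcos_self[OF a(1) K] eK by simp
    then have k: "?a \<otimes> inv ?b \<in> K" using subgroup.rcos_module_imp[OF K is_group a(2)] by blast
    have "?a \<in> (H \<inter> K) #> ?b" using subgroup.rcos_module_rev[OF HK is_group a(2) a(1)] h k by blast
    then have in1: "?a \<in> Z" using rC Z by auto
    have in2: "?a \<in> Y" using rC Y by auto
    show "Y = Z"
    proof (rule ccontr)
      assume "Y \<noteq> Z"
      then have "disjnt Y Z" using pairwiseD[OF rcos_disjoint[OF HK] Y Z] by blast
      then show False using in1 in2 by (simp add: disjnt_iff)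
    qed
  qed
  have "g ` (rcosets (H \<inter> K)) \<subseteq> (rcosets H) \<times> (rcosets K)"
  proof
    fix p assume "p \<in> g ` (rcosets (H \<inter> K))"
    then obtain Y where Y: "Y \<in> rcosets (H \<inter> K)" "p = g Y" by auto
    have "r Y \<in> carrier G" using rC Y by blast
    then show "p \<in> (rcosets H) \<times> (rcosets K)" using Y rcosetsI[OF Hc] rcosetsI[OF Kc] by (simp add: g_def)
  qed
  then show ?thesis using inj_on_finite[OF inj] fH fK by blast
qed


lemma main_aux:
  shows "(\<forall>H M. H \<subseteq> M \<and> subgroup M G \<and> exponential G M \<and>
                  exponential (G\<lparr>carrier := M\<rparr>) H \<longrightarrow> exponential G H)
       \<and> (\<forall>H K. exponential G H \<and> exponential G K \<longrightarrow> exponential G (H \<inter> K))"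
proof -
  have P1: "exponential G H" if a: "H \<subseteq> M \<and> subgroup M G \<and> exponential G M \<and>
                  exponential (G\<lparr>carrier := M\<rparr>) H" for H M
  proof -
    have HM: "H \<subseteq> M" and M: "subgroup M G" using a by auto
    have fM: "finite (rcosets M)" and pM: "\<forall>x\<in>carrier G. x [^] card (rcosets M) \<in> M"
      using a by (auto simp: exponential_def)
    have sH: "subgroup H (G\<lparr>carrier := M\<rparr>)" and fR: "finite (rcosets\<^bsub>G\<lparr>carrier := M\<rparr>\<^esub> H)"
      and pR: "\<forall>x\<in>M. x [^]\<^bsub>G\<lparr>carrier := M\<rparr>\<^esub> card (rcosets\<^bsub>G\<lparr>carrier := M\<rparr>\<^esub> H) \<in> H"
      using a by (auto simp: exponential_def)
    have H: "subgroup H G" by (rule incl_subgroup[OF M sH])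
    have im: "finite (rcosets H) \<and> card (rcosets H) = card (rcosets M) * card (rcosets\<^bsub>G\<lparr>carrier := M\<rparr>\<^esub> H)"
      by (rule index_mult[OF H M HM fM fR])
    have "x [^] card (rcosets H) \<in> H" if x: "x \<in> carrier G" for x
    proof -
      have y: "x [^] card (rcosets M) \<in> M" using pM x by blast
      have "x [^] card (rcosets H) = (x [^] card (rcosets M)) [^] card (rcosets\<^bsub>G\<lparr>carrier := M\<rparr>\<^esub> H)"
        using im nat_pow_pow[OF x] by simp
      also have "\<dots> = (x [^] card (rcosets M)) [^]\<^bsub>G\<lparr>carrier := M\<rparr>\<^esub> card (rcosets\<^bsub>G\<lparr>carrier := M\<rparr>\<^esub> H)"
        by (rule nat_pow_consistent)
      finally show ?thesis using pR y by simp
    qed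
    then show ?thesis using H im by (simp add: exponential_def)
  qed
  have P2: "exponential G (H \<inter> K)" if a: "exponential G H \<and> exponential G K" for H K
  proof -
    have H: "subgroup H G" and K: "subgroup K G" and fH: "finite (rcosets H)" and fK: "finite (rcosets K)"
      and pH: "\<forall>x\<in>carrier G. x [^] card (rcosets H) \<in> H"
      and pK: "\<forall>x\<in>carrier G. x [^] card (rcosets K) \<in> K"
      using a by (auto simp: exponential_def)
    have HK: "subgroup (H \<inter> K) G" using subgroups_Inter_pair[OF H K] .
    have fHK: "finite (rcosets (H \<inter> K))" by (rule inter_index_finite[OF H K fH fK])
    have Hc: "H \<subseteq> carrier G" using H subgroup.subset by blast
    have Kc: "K \<subseteq> carrier G" using K subgroup.subset by blast
    have f1: "finite (rcosets\<^bsub>G\<lparr>carrier := H\<rparr>\<^esub> (H \<inter> K))"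
      using finite_subset[OF sub_rcosets_subset[OF HK _ Hc] fHK] by blast
    have f2: "finite (rcosets\<^bsub>G\<lparr>carrier := K\<rparr>\<^esub> (H \<inter> K))"
      using finite_subset[OF sub_rcosets_subset[OF HK _ Kc] fHK] by blast
    have c1: "card (rcosets (H \<inter> K)) = card (rcosets H) * card (rcosets\<^bsub>G\<lparr>carrier := H\<rparr>\<^esub> (H \<inter> K))"
      using index_mult[OF HK H _ fH f1] by blast
    have c2: "card (rcosets (H \<inter> K)) = card (rcosets K) * card (rcosets\<^bsub>G\<lparr>carrier := K\<rparr>\<^esub> (H \<inter> K))"
      using index_mult[OF HK K _ fK f2] by blast
    have "x [^] card (rcosets (H \<inter> K)) \<in> H \<inter> K" if x: "x \<in> carrier G" for x
    proof -
      have "x [^] card (rcosets (H \<inter> K)) \<in> H" unfolding c1 using pow_mult_in[OF H x] pH x by blast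
      moreover have "x [^] card (rcosets (H \<inter> K)) \<in> K" unfolding c2 using pow_mult_in[OF K x] pK x by blast
      ultimately show ?thesis by blast
    qed
    then show ?thesis using HK fHK by (simp add: exponential_def)
  qed
  show ?thesis using P1 P2 by blast
qed

end

theorem lemma4p6:
  fixes G :: "('a, 'b) monoid_scheme"
  assumes "group G"
  shows "(\<forall>H M. H \<subseteq> M \<and> subgroup M G \<and> exponential G M \<and>
                  exponential (G\<lparr>carrier := M\<rparr>) H \<longrightarrow> exponential G H)
       \<and> (\<forall>H K. exponential G H \<and> exponential G K \<longrightarrow> exponential G (H \<inter> K))"
  using group.main_aux[OF assms] .

end
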